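(* Assume the setting described in the context (hypotheses on $f,v,\eta$, the mesh condition $h<1/C$ and the CFL condition). If $\rho^o_j\ge 0$ for all $j\in\mathbb{Z}$, then the approximate solution constructed by the scheme satisfies $\|\rho^n\|_{L^1}\le\|\rho^o\|_{L^1}$ for all $n\in\mathbb{N}$.
   Context: Let $C>0$ and let $f\in C^2(\mathbb{R}^+\times\mathbb{R}\times\mathbb{R};\mathbb{R})$ satisfy $\sup_{t,x,\rho}|\partial_\rho f(t,x,\rho)|<+\infty$, $\sup_{t,x}|\partial_x f(t,x,\rho)|< C|\rho|$ and $\sup_{t,x}|\partial^2_{xx} f(t,x,\rho)|< C|\rho|$ for all $\rho$, and $f(t,x,0)=0$ for all $t,x$. Let $v\in (C^2\cap W^{1,\infty})(\mathbb{R};\mathbb{R})$ and $\eta\in (C^2\cap W^{2,\infty})(\mathbb{R};\mathbb{R})$. These are the data of the nonlocal conservation law $\partial_t\rho+\partial_x\big(f(t,x,\rho)\,v(\rho*\eta)\big)=0$, $\rho(0,x)=\rho^o(x)$, with $\rho^o\in L^\infty(\mathbb{R})$. Numerical scheme: fix a space step $h>0$ and time step $\tau>0$, set $\lambda=\tau/h$, $x_j=jh$, $x_{j+1/2}=(j+\tfrac12)h$, $t^n=n\tau$. Assume $h<1/C$ and the CFL condition $\lambda\,(1+2\|\partial_\rho f\|_{L^\infty})\|v\|_{L^\infty}\le 1/6$. Set $\rho^o_j=\frac1h\int_{x_{j-1/2}}^{x_{j+1/2}}\rho^o(x)\,dx$ and $\rho^{n+1}_j=\rho^n_j-\lambda\big(\mathbf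 f^n_{j+1/2}(\rho^n_j,\rho^n_{j+1})-\mathbf f^n_{j-1/2}(\rho^n_{j-1},\rho^n_j)\big)$, where $\mathbf f^n_{j+1/2}(\rho_1,\rho_2)=\frac{f(t^n,x_{j+1/2},\rho_1)+f(t^n,x_{j+1/2},\rho_2)}{2}\,v(c^n_{j+1/2})-\frac{1}{6\lambda}(\rho_2-\rho_1)$, $c^n_{j+1/2}=\sum_{k\in\mathbb{Z}} h\,\rho^n_{k+1/2}\,\eta_{j+1/2-k}$, with $\rho^n_{k+1/2}$ a convex combination of $\rho^n_k$ and $\rho^n_{k+1}$, and $\eta_{m+1/2}=\frac1h\int_{x_m}^{x_{m+1}}\eta(x)\,dx$. Discrete norms: $\|\rho^n\|_{L^1}=\sum_{j\in\mathbb{Z}}h|\rho^n_j|$ (and $\|\rho^o\|_{L^1}$ is the $L^1$ norm of the initial datum). *)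

theory Defs
  imports "HOL-Analysis.Analysis"
begin

definition C2_on :: "'a::real_normed_vector set \<Rightarrow> ('a \<Rightarrow> real) \<Rightarrow> bool" where
  "C2_on S g \<longleftrightarrow> (\<exists>D1 D2.
      (\<forall>x\<in>S. (g has_derivative blinfun_apply (D1 x)) (at x within S)) \<and>
      (\<forall>x\<in>S. (D1 has_derivative blinfun_apply (D2 x)) (at x within S)) \<and>
      continuous_on S D2)"

definition d_rho :: "(real \<Rightarrow> real \<Rightarrow> real \<Rightarrow> real) \<Rightarrow> real \<Rightarrow> real \<Rightarrow> real \<Rightarrow> real" where
  "d_rho f t x r = deriv (\<lambda>s. f t x s) r"

definition d_x :: "(real \<Rightarrow> real \<Rightarrow> real \<Rightarrow> real) \<Rightarrow> real \<Rightarrow> real \<Rightarrow> real \<Rightarrow> real" where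
  "d_x f t x r = deriv (\<lambda>y. f t y r) x"

definition d_xx :: "(real \<Rightarrow> real \<Rightarrow> real \<Rightarrow> real) \<Rightarrow> real \<Rightarrow> real \<Rightarrow> real \<Rightarrow> real" where
  "d_xx f t x r = deriv (\<lambda>y. deriv (\<lambda>z. f t z r) y) x"

text \<open>Numerical flux  f^n_{j+1/2}(r1,r2); argument c is c^n_{j+1/2}, lam = tau/h.\<close>
definition num_flux ::
  "(real \<Rightarrow> real \<Rightarrow> real \<Rightarrow> real) \<Rightarrow> (real \<Rightarrow> real) \<Rightarrow> real \<Rightarrow> real \<Rightarrow> nat \<Rightarrow> int \<Rightarrow> real
     \<Rightarrow> real \<Rightarrow> real \<Rightarrow> real" where
  "num_flux f v h tau n j c r1 r2 =
     (f (real n * tau) ((real_of_int j + 1/2) * h) r1 + f (real n * tau) ((real_of_int j + 1/2) * h) r2) / 2 * v c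
     - (r2 - r1) / (6 * (tau / h))"

end

theory Submission
  imports Defs
begin

lemma f_lip:
  fixes f :: "real \<Rightarrow> real \<Rightarrow> real \<Rightarrow> real"
  assumes f_C2: "C2_on ({0..} \<times> UNIV \<times> UNIV) (\<lambda>(t, x, r). f t x r)"
    and bd: "\<And>s. \<bar>d_rho f t x s\<bar> \<le> L"
    and f0: "f t x 0 = 0" and t: "t \<ge> 0"
  shows "\<bar>f t x r\<bar> \<le> L * \<bar>r\<bar>"
proof -
  let ?S = "({0..} \<times> UNIV \<times> UNIV) :: (real \<times> real \<times> real) set"
  obtain D1 :: "real \<times> real \<times> real \<Rightarrow> (real \<times> real \<times> real) \<Rightarrow>\<^sub>L real" where
    D1: "\<And>p. p \<in> ?S \<Longrightarrow> ((\<lambda>(t, x, r). f t x r) has_derivative blinfun_apply (D1 p)) (at p within ?S)"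
    using f_C2 unfolding C2_on_def by blast
  have diff: "(\<lambda>s. f t x s) differentiable (at s)" for s
  proof -
    have "((\<lambda>s. (t, x, s)) has_derivative (\<lambda>h. (0, 0, h))) (at s within UNIV)"
      by (auto intro!: derivative_eq_intros)
    from has_derivative_in_compose2[OF D1 _ _ this]
    have "((\<lambda>s. (\<lambda>(t, x, r). f t x r) (t, x, s)) has_derivative (\<lambda>y. blinfun_apply (D1 (t,x,s)) (0,0,y))) (at s)"
      using t by auto
    then show ?thesis unfolding differentiable_def by auto
  qed
  have der: "((\<lambda>s. f t x s) has_field_derivative d_rho f t x s) (at s within UNIV)" for s
    unfolding d_rho_def using diff[of s] DERIV_deriv_iff_real_differentiable by blast
  have "norm (f t x r - f t x 0) \<le> L * norm (r - 0)"
    by (rule field_differentiable_bound[OF convex_UNIV der]) (use bd in auto)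
  then show ?thesis using f0 by simp
qed

lemma cell_bound:
  fixes g :: "real \<Rightarrow> real" and a b :: real
  assumes [measurable]: "g \<in> borel_measurable lborel"
  shows "ennreal \<bar>LINT x:{a..b}|lborel. g x\<bar> \<le> (\<integral>\<^sup>+x. ennreal \<bar>g x\<bar> * indicator {a..<b} x \<partial>lborel)"
proof -
  have "ennreal \<bar>LINT x:{a..b}|lborel. g x\<bar> \<le> (\<integral>\<^sup>+x. ennreal (norm (indicator {a..b} x *\<^sub>R g x)) \<partial>lborel)"
  proof (cases "integrable lborel (\<lambda>x. indicator {a..b} x *\<^sub>R g x)")
    case True
    then show ?thesis using integral_norm_bound_ennreal[OF True]
      by (simp add: set_lebesgue_integral_def)
  next
    case False
    then show ?thesis by (simp add: set_lebesgue_integral_def not_integrable_integral_eq)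
  qed
  also have "\<dots> = (\<integral>\<^sup>+x. ennreal \<bar>g x\<bar> * indicator {a..<b} x \<partial>lborel)"
    apply (rule nn_integral_cong_AE)
    using AE_lborel_singleton[of b]
    by eventually_elim (auto split: split_indicator simp: abs_mult)
  finally show ?thesis .
qed

lemma init_bound:
  fixes g :: "real \<Rightarrow> real" and h :: real
  assumes [measurable]: "g \<in> borel_measurable lborel" and h: "h > 0"
  shows "(\<integral>\<^sup>+j. ennreal \<bar>LINT x:{(real_of_int j - 1/2) * h .. (real_of_int j + 1/2) * h}|lborel. g x\<bar> \<partial>count_space UNIV)
     \<le> (\<integral>\<^sup>+x. ennreal \<bar>g x\<bar> \<partial>lborel)"
proof -
  define I where "I j = {(real_of_int j - 1/2) * h ..< (real_of_int j + 1/2) * h}" for j :: int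
  have key: "x \<in> I j \<longleftrightarrow> j = \<lfloor>x / h + 1/2\<rfloor>" for x j
  proof -
    have "x \<in> I j \<longleftrightarrow> real_of_int j \<le> x / h + 1/2 \<and> x / h + 1/2 < real_of_int j + 1"
      unfolding I_def using h by (auto simp: field_simps)
    also have "\<dots> \<longleftrightarrow> j = \<lfloor>x / h + 1/2\<rfloor>" by (metis floor_eq_iff)
    finally show ?thesis .
  qed
  have "(\<integral>\<^sup>+j. ennreal \<bar>LINT x:{(real_of_int j - 1/2) * h .. (real_of_int j + 1/2) * h}|lborel. g x\<bar> \<partial>count_space UNIV)
     \<le> (\<integral>\<^sup>+j. (\<integral>\<^sup>+x. ennreal \<bar>g x\<bar> * indicator (I j) x \<partial>lborel) \<partial>count_space UNIV)"
    unfolding I_def by (intro nn_integral_mono cell_bound) simp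
  also have "\<dots> = (\<integral>\<^sup>+x. (\<integral>\<^sup>+j. ennreal \<bar>g x\<bar> * indicator (I j) x \<partial>count_space UNIV) \<partial>lborel)"
    by (rule nn_integral_count_space_nn_integral[symmetric]) (auto simp: I_def)
  also have "\<dots> = (\<integral>\<^sup>+x. ennreal \<bar>g x\<bar> \<partial>lborel)"
  proof (rule nn_integral_cong)
    fix x
    have "(\<integral>\<^sup>+j. ennreal \<bar>g x\<bar> * indicator (I j) x \<partial>count_space UNIV)
        = (\<integral>\<^sup>+j. ennreal \<bar>g x\<bar> * indicator {\<lfloor>x / h + 1/2\<rfloor>} j \<partial>count_space UNIV)"
      by (intro nn_integral_cong) (auto simp: key split: split_indicator)
    also have "\<dots> = ennreal \<bar>g x\<bar>" by simp
    finally show "(\<integral>\<^sup>+j. ennreal \<bar>g x\<bar> * indicator (I j) x \<partial>count_space UNIV) = ennreal \<bar>g x\<bar>" .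
  qed
  finally show ?thesis .
qed

lemma step_mass:
  fixes r r' a b c :: "int \<Rightarrow> real" and h :: real
  assumes eq: "\<And>j. r' j = a j * r j + b j * r (j+1) + c j * r (j-1)"
    and nn: "\<And>j. a j \<ge> 0" "\<And>j. b j \<ge> 0" "\<And>j. c j \<ge> 0" "\<And>j. r j \<ge> 0"
    and sum1: "\<And>k. a k + b (k-1) + c (k+1) = 1" and h: "h > 0"
  shows "(\<integral>\<^sup>+j. ennreal (h * r' j) \<partial>count_space UNIV) = (\<integral>\<^sup>+j. ennreal (h * r j) \<partial>count_space UNIV)"
proof -
  have bij1: "bij_betw (\<lambda>j::int. j + 1) UNIV UNIV"
    by (rule bij_betwI[where g="\<lambda>j. j - 1"]) auto
  have bij2: "bij_betw (\<lambda>j::int. j - 1) UNIV UNIV"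
    by (rule bij_betwI[where g="\<lambda>j. j + 1"]) auto
  have "(\<integral>\<^sup>+j. ennreal (h * r' j) \<partial>count_space UNIV)
     = (\<integral>\<^sup>+j. ennreal (h * a j * r j) + ennreal (h * b j * r (j+1)) + ennreal (h * c j * r (j-1)) \<partial>count_space UNIV)"
  proof (intro nn_integral_cong)
    fix j
    have "h * r' j = h * a j * r j + h * b j * r (j+1) + h * c j * r (j-1)"
      unfolding eq by (simp add: algebra_simps)
    moreover have "h * a j * r j \<ge> 0" "h * b j * r (j+1) \<ge> 0" "h * c j * r (j-1) \<ge> 0"
      using nn h by auto
    ultimately show "ennreal (h * r' j) = ennreal (h * a j * r j) + ennreal (h * b j * r (j+1)) + ennreal (h * c j * r (j-1))"
      by (simp add: ennreal_plus)
  qed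
  also have "\<dots> = (\<integral>\<^sup>+j. ennreal (h * a j * r j) \<partial>count_space UNIV)
      + (\<integral>\<^sup>+j. ennreal (h * b j * r (j+1)) \<partial>count_space UNIV)
      + (\<integral>\<^sup>+j. ennreal (h * c j * r (j-1)) \<partial>count_space UNIV)"
    by (simp add: nn_integral_add)
  also have "(\<integral>\<^sup>+j. ennreal (h * b j * r (j+1)) \<partial>count_space UNIV)
     = (\<integral>\<^sup>+j. ennreal (h * b (j-1) * r j) \<partial>count_space UNIV)"
    using nn_integral_bij_count_space[OF bij1, of "\<lambda>j. ennreal (h * b (j-1) * r j)"] by simp
  also have "(\<integral>\<^sup>+j. ennreal (h * c j * r (j-1)) \<partial>count_space UNIV)
     = (\<integral>\<^sup>+j. ennreal (h * c (j+1) * r j) \<partial>count_space UNIV)"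
    using nn_integral_bij_count_space[OF bij2, of "\<lambda>j. ennreal (h * c (j+1) * r j)"] by simp
  also have "(\<integral>\<^sup>+j. ennreal (h * a j * r j) \<partial>count_space UNIV)
      + (\<integral>\<^sup>+j. ennreal (h * b (j-1) * r j) \<partial>count_space UNIV)
      + (\<integral>\<^sup>+j. ennreal (h * c (j+1) * r j) \<partial>count_space UNIV)
      = (\<integral>\<^sup>+j. ennreal (h * a j * r j) + ennreal (h * b (j-1) * r j) + ennreal (h * c (j+1) * r j) \<partial>count_space UNIV)"
    by (simp add: nn_integral_add)
  also have "\<dots> = (\<integral>\<^sup>+j. ennreal (h * r j) \<partial>count_space UNIV)"
  proof (intro nn_integral_cong)
    fix j
    have "h * a j * r j + h * b (j-1) * r j + h * c (j+1) * r j = h * r j * (a j + b (j-1) + c (j+1))"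
      by (simp add: algebra_simps)
    moreover have "h * a j * r j \<ge> 0" "h * b (j-1) * r j \<ge> 0" "h * c (j+1) * r j \<ge> 0"
      using nn h by auto
    ultimately show "ennreal (h * a j * r j) + ennreal (h * b (j-1) * r j) + ennreal (h * c (j+1) * r j) = ennreal (h * r j)"
      using sum1[of j] by (simp add: ennreal_plus[symmetric] del: ennreal_plus)
  qed
  finally show ?thesis .
qed

theorem lemma2p4:
  fixes f :: "real \<Rightarrow> real \<Rightarrow> real \<Rightarrow> real"
    and v eta rho0 :: "real \<Rightarrow> real"
    and C h tau :: real
    and theta :: "nat \<Rightarrow> int \<Rightarrow> real"
    and rho :: "nat \<Rightarrow> int \<Rightarrow> real"
  assumes C_pos: "C > 0"
    and f_C2: "C2_on ({0..} \<times> UNIV \<times> UNIV) (\<lambda>(t, x, r). f t x r)"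
    and f_rho_bdd: "\<exists>L. \<forall>t\<ge>0. \<forall>x r. \<bar>d_rho f t x r\<bar> \<le> L"
    and f_x_bdd: "\<forall>r. r \<noteq> 0 \<longrightarrow> (\<exists>K < C * \<bar>r\<bar>. \<forall>t\<ge>0. \<forall>x. \<bar>d_x f t x r\<bar> \<le> K)"
    and f_xx_bdd: "\<forall>r. r \<noteq> 0 \<longrightarrow> (\<exists>K < C * \<bar>r\<bar>. \<forall>t\<ge>0. \<forall>x. \<bar>d_xx f t x r\<bar> \<le> K)"
    and f_zero: "\<forall>t\<ge>0. \<forall>x. f t x 0 = 0"
    and v_C2: "C2_on UNIV v"
    and v_bdd: "\<exists>M. \<forall>u. \<bar>v u\<bar> \<le> M"
    and v'_bdd: "\<exists>M. \<forall>u. \<bar>deriv v u\<bar> \<le> M"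
    and eta_C2: "C2_on UNIV eta"
    and eta_bdd: "\<exists>M. \<forall>u. \<bar>eta u\<bar> \<le> M"
    and eta'_bdd: "\<exists>M. \<forall>u. \<bar>deriv eta u\<bar> \<le> M"
    and eta''_bdd: "\<exists>M. \<forall>u. \<bar>deriv (deriv eta) u\<bar> \<le> M"
    and rho0_meas: "rho0 \<in> borel_measurable lborel"
    and rho0_Linf: "\<exists>M. AE x in lborel. \<bar>rho0 x\<bar> \<le> M"
    and h_pos: "h > 0" and tau_pos: "tau > 0"
    and h_small: "h < 1 / C"
    and CFL: "(tau / h) * (1 + 2 * (SUP p \<in> {0::real..} \<times> (UNIV::real set) \<times> (UNIV::real set).
                 \<bar>d_rho f (fst p) (fst (snd p)) (snd (snd p))\<bar>)) * (SUP u. \<bar>v u\<bar>) \<le> 1 / 6"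
    and theta_range: "\<forall>n k. 0 \<le> theta n k \<and> theta n k \<le> 1"
    and rho_init: "\<forall>j. rho 0 j = (1 / h) *
          (LINT x:{(real_of_int j - 1/2) * h .. (real_of_int j + 1/2) * h}|lborel. rho0 x)"
    and rho_step: "\<forall>n j. rho (Suc n) j = rho n j - (tau / h) *
          (num_flux f v h tau n j
             (\<Sum>\<^sub>\<infinity>k. h * (theta n k * rho n k + (1 - theta n k) * rho n (k + 1))
                   * ((1 / h) * (LINT x:{real_of_int (j - k) * h .. real_of_int (j - k + 1) * h}|lborel. eta x)))
             (rho n j) (rho n (j + 1))
         - num_flux f v h tau n (j - 1)
             (\<Sum>\<^sub>\<infinity>k. h * (theta n k * rho n k + (1 - theta n k) * rho n (k + 1))
                   * ((1 / h) * (LINT x:{real_of_int (j - 1 - k) * h .. real_of_int (j - 1 - k + 1) * h}|lborel. eta x)))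
             (rho n (j - 1)) (rho n j))"
    and init_nonneg: "\<forall>j. rho 0 j \<ge> 0"
  shows "\<forall>n. (\<integral>\<^sup>+ j. ennreal (h * \<bar>rho n j\<bar>) \<partial>count_space UNIV)
              \<le> (\<integral>\<^sup>+ x. ennreal \<bar>rho0 x\<bar> \<partial>lborel)"
proof -
  define lam where "lam = tau / h"
  have lam_pos: "lam > 0" using h_pos tau_pos by (simp add: lam_def)
  define S where "S = ({0::real..} \<times> (UNIV::real set) \<times> (UNIV::real set))"
  define L where "L = (SUP p \<in> S. \<bar>d_rho f (fst p) (fst (snd p)) (snd (snd p))\<bar>)"
  define V where "V = (SUP u. \<bar>v u\<bar>)"
  obtain L0 where L0: "\<forall>t\<ge>0. \<forall>x r. \<bar>d_rho f t x r\<bar> \<le> L0" using f_rho_bdd by blast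
  have bddL: "bdd_above ((\<lambda>p. \<bar>d_rho f (fst p) (fst (snd p)) (snd (snd p))\<bar>) ` S)"
    using L0 unfolding S_def by (intro bdd_aboveI[where M=L0]) auto
  have dL: "\<bar>d_rho f t x r\<bar> \<le> L" if "t \<ge> 0" for t x r
    using cSUP_upper[OF _ bddL, of "(t, x, r)"] that unfolding L_def S_def by auto
  have L_nn: "L \<ge> 0" using dL[of 0 0 0] by linarith
  obtain V0 where V0: "\<forall>u. \<bar>v u\<bar> \<le> V0" using v_bdd by blast
  have bddV: "bdd_above (range (\<lambda>u. \<bar>v u\<bar>))"
    using V0 by (intro bdd_aboveI[where M=V0]) auto
  have vV: "\<bar>v u\<bar> \<le> V" for u
    using cSUP_upper[OF _ bddV, of u] unfolding V_def by auto
  have V_nn: "V \<ge> 0" using vV[of 0] by linarith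
  have CFL': "lam * (1 + 2 * L) * V \<le> 1 / 6"
    using CFL unfolding lam_def L_def V_def S_def .
  have lLV: "lam * L * V \<le> 1 / 12"
  proof -
    have "lam * V \<ge> 0" using lam_pos V_nn by simp
    moreover have "lam * (1 + 2 * L) * V = lam * V + 2 * (lam * L * V)" by (simp add: algebra_simps)
    ultimately show ?thesis using CFL' by linarith
  qed
  have flip: "\<bar>f t x r\<bar> \<le> L * \<bar>r\<bar>" if "t \<ge> 0" for t x r
    by (rule f_lip[OF f_C2]) (use dL f_zero that in auto)
  define g where "g t x r = (if r = 0 then 0 else f t x r / r)" for t x r
  have fg: "f t x r = g t x r * r" if "t \<ge> 0" for t x r
    using f_zero that unfolding g_def by auto
  have gb: "\<bar>g t x r\<bar> \<le> L" if "t \<ge> 0" for t x r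
  proof (cases "r = 0")
    case True then show ?thesis using L_nn by (simp add: g_def)
  next
    case False
    then have "\<bar>g t x r\<bar> = \<bar>f t x r\<bar> / \<bar>r\<bar>" by (simp add: g_def abs_divide)
    also have "\<dots> \<le> L" using flip[OF that, of x r] False by (simp add: divide_le_eq)
    finally show ?thesis .
  qed
  define cc where "cc n j = (\<Sum>\<^sub>\<infinity>k. h * (theta n k * rho n k + (1 - theta n k) * rho n (k + 1))
                   * ((1 / h) * (LINT x:{real_of_int (j - k) * h .. real_of_int (j - k + 1) * h}|lborel. eta x)))"
    for n :: nat and j :: int
  define GV where "GV n j r = g (real n * tau) ((real_of_int j + 1/2) * h) r * v (cc n j)" for n :: nat and j :: int and r
  have GVb: "\<bar>GV n j r\<bar> \<le> L * V" for n j r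
    unfolding GV_def abs_mult
    by (rule mult_mono) (use gb vV L_nn tau_pos in auto)
  define a where "a n j = 2/3 - lam/2 * (GV n j (rho n j) - GV n (j-1) (rho n j))" for n j
  define b where "b n j = 1/6 - lam/2 * GV n j (rho n (j+1))" for n j
  define c where "c n j = 1/6 + lam/2 * GV n (j-1) (rho n (j-1))" for n j
  have step: "rho (Suc n) j = rho n j - lam * (num_flux f v h tau n j (cc n j) (rho n j) (rho n (j+1))
      - num_flux f v h tau n (j-1) (cc n (j-1)) (rho n (j-1)) (rho n j))" for n j
    using rho_step unfolding cc_def lam_def by blast
  have eqn: "rho (Suc n) j = a n j * rho n j + b n j * rho n (j+1) + c n j * rho n (j-1)" for n j
  proof -
    have fg': "f (real n * tau) x r = g (real n * tau) x r * r" for x r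
      using fg tau_pos by simp
    have "tau / h = lam" by (simp add: lam_def)
    then show ?thesis
      unfolding step num_flux_def fg' a_def b_def c_def GV_def
      using lam_pos by (simp add: field_simps)
  qed
  have sum1: "a n k + b n (k-1) + c n (k+1) = 1" for n k
    unfolding a_def b_def c_def by (simp add: algebra_simps)
  have coef: "a n j \<ge> 0 \<and> b n j \<ge> 0 \<and> c n j \<ge> 0" for n j
  proof -
    have l1: "lam * \<bar>GV n j r\<bar> \<le> 1/12" for j r
    proof -
      have "lam * \<bar>GV n j r\<bar> \<le> lam * (L * V)"
        using mult_left_mono[OF GVb[of n j r], of lam] lam_pos by simp
      also have "\<dots> = lam * L * V" by simp
      finally show ?thesis using lLV by linarith
    qed
    have "\<bar>lam * GV n j r\<bar> \<le> 1/12" for j r using l1[of j r] lam_pos by (simp add: abs_mult)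
    then have m: "- 1/12 \<le> lam * GV n j r \<and> lam * GV n j r \<le> 1/12" for j r
      by (metis abs_le_D1 abs_le_D2 minus_divide_left minus_le_iff)
    show ?thesis unfolding a_def b_def c_def
      using m[of j "rho n j"] m[of "j-1" "rho n j"] m[of j "rho n (j+1)"] m[of "j-1" "rho n (j-1)"]
      by (simp add: algebra_simps)
  qed
  have nonneg: "\<forall>j. rho n j \<ge> 0" for n
  proof (induction n)
    case 0 then show ?case using init_nonneg by simp
  next
    case (Suc n)
    show ?case using coef Suc by (simp add: eqn)
  qed
  have mass: "(\<integral>\<^sup>+j. ennreal (h * rho n j) \<partial>count_space UNIV) = (\<integral>\<^sup>+j. ennreal (h * rho 0 j) \<partial>count_space UNIV)" for n
  proof (induction n)
    case 0 then show ?case by simp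
  next
    case (Suc n)
    have "(\<integral>\<^sup>+j. ennreal (h * rho (Suc n) j) \<partial>count_space UNIV) = (\<integral>\<^sup>+j. ennreal (h * rho n j) \<partial>count_space UNIV)"
      by (rule step_mass[where a="a n" and b="b n" and c="c n"])
         (use eqn coef nonneg sum1 h_pos in auto)
    then show ?case using Suc by simp
  qed
  show ?thesis
  proof
    fix n
    have "(\<integral>\<^sup>+j. ennreal (h * \<bar>rho n j\<bar>) \<partial>count_space UNIV) = (\<integral>\<^sup>+j. ennreal (h * rho 0 j) \<partial>count_space UNIV)"
      using mass[of n] nonneg[of n] by simp
    also have "\<dots> = (\<integral>\<^sup>+j. ennreal \<bar>LINT x:{(real_of_int j - 1/2) * h .. (real_of_int j + 1/2) * h}|lborel. rho0 x\<bar> \<partial>count_space UNIV)"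
    proof (intro nn_integral_cong)
      fix j
      have "h * rho 0 j = (LINT x:{(real_of_int j - 1/2) * h .. (real_of_int j + 1/2) * h}|lborel. rho0 x)"
        using rho_init h_pos by simp
      then show "ennreal (h * rho 0 j) = ennreal \<bar>LINT x:{(real_of_int j - 1/2) * h .. (real_of_int j + 1/2) * h}|lborel. rho0 x\<bar>"
        using init_nonneg h_pos by (metis abs_of_nonneg mult_nonneg_nonneg less_imp_le)
    qed
    also have "\<dots> \<le> (\<integral>\<^sup>+x. ennreal \<bar>rho0 x\<bar> \<partial>lborel)"
      by (rule init_bound[OF rho0_meas h_pos])
    finally show "(\<integral>\<^sup>+j. ennreal (h * \<bar>rho n j\<bar>) \<partial>count_space UNIV) \<le> (\<integral>\<^sup>+x. ennreal \<bar>rho0 x\<bar> \<partial>lborel)" .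
  qed
qed

end
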